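(* Assume $a_T/T\to\infty$. Let $\hat c_{\mathrm R}(x,\mathbb P,T)=\max_{i\in\Sigma}\ell(x,i)$ and $\hat x^{\mathrm R}_T(\mathbb P)\in\arg\min_{x\in\mathcal X}\max_{i\in\Sigma}\ell(x,i)$. Then $(\hat c_{\mathrm R},\hat x^{\mathrm R})$ is a predictor–prescriptor pair satisfying the prescription out-of-sample guarantee with speed $(a_T)$, and for every predictor–prescriptor pair $(\hat c,\hat x)$ satisfying the prescription out-of-sample guarantee with speed $(a_T)$ we have $(\hat c_{\mathrm R},\hat x^{\mathrm R})\preceq_{\hat{\mathcal X}}(\hat c,\hat x)$.
   Context: Setting: $\Sigma=\{1,\dots,d\}$ ($d\ge2$) is finite; $\mathcal P\subset\mathbb R^d$ is the probability simplex over $\Sigma$ and $\mathcal P^o$ its relative interior (all entries positive). $\mathcal X\subset\mathbb R^n$ is compact and $\ell:\mathcal X\times\Sigma\to\mathbb R$ is continuous in $x$ for each $i$. For $x\in\mathcal X$, $\mu\in\mathbb R^d$ let $c(x,\mu)=\sum_{i\in\Sigma}\ell(x,i)\mu(i)$ and $c^\star(\mathbb P)=\min_{x\in\mathcal X}c(x,\mathbb P)$. Data $\xi_1,\xi_2,\dots$ are i.i.d. with law $\mathbb P\in\mathcal P$, $\mathbb P^\infty$ denotes their joint law, and $\hat{\mathbb P}_T(i)=\frac1T\sum_{t=1}^T\mathbf 1\{\xi_t=i\}$. $(a_T)_{T\ge1}$ is a sequence of positive reals with $a_T\to\infty$. A predictor is a sequence $\hat c=(\hat c(\cdot,\cdot,T))_{T\in\mathbb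 N}$ of functions $\mathcal X\times\mathcal P\to\mathbb R$. It is regular, written $\hat c\in\mathcal C$, if (i) the sequence $(\hat c(\cdot,\cdot,T))_T$ is uniformly bounded and equicontinuous on $\mathcal X\times\mathcal P$, and (ii) each $\hat c(x,\cdot,T)$ is differentiable in $\mathbb P$ and the sequence of derivative maps $(x,\mathbb P)\mapsto\nabla_{\mathbb P}\hat c(x,\mathbb P,T)$ is uniformly bounded and equicontinuous. (A sequence $(f_T)$ is equicontinuous if for every point $y$ and $\varepsilon>0$ there is a neighbourhood $U$ of $y$ with $|f_T(y)-f_T(z)|<\varepsilon$ for all $z\in U$ and all $T$.) A predictor–prescriptor pair $(\hat c,\hat x)$ consists of $\hat c\in\mathcal C$ and functions $\hat x_T:\mathcal P\to\mathcal X$ with $\hat x_T(\mathbb P)\in\arg\min_{x\in\mathcal X}\hat c(x,\mathbb P,T)$ for all $\mathbb P,T$; put $\hat c^\star(\mathbb P,T)=\hat c(\hat x_T(\mathbb P),\mathbb P,T)$. Prescription out-of-sample guarantee with speed $(a_T)$: for all $\mathbb P\in\mathcal P^o$, $\limsup_{T\to\infty}\frac1{a_T}\log\mathbb P^\infty\big(c(\hat x_T(\hat{\mathbb P}_T),\mathbb P)>\hat c^\star(\hat{\mathbb P}_T,T)\big)\le-1$. Order: $(\hat c_1,\hat x_1)\preceq_{\hat{\mathcal X}}(\hat c_2,\hat x_2)$ iff for all $\mathbb P\in\mathcal P^o$, $\limsup_{T\to\infty}\frac{|\hat c_1^\star(\mathbb P,T)-c^\star(\mathbb P)|}{|\hat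 c_2^\star(\mathbb P,T)-c^\star(\mathbb P)|}\le1$ (convention $0/0=1$). *)

theory Defs
  imports "HOL-Analysis.Analysis"
begin

text \<open>Alphabet Sigma is a finite type 'd; distributions are vectors in real^'d.\<close>

definition prob_simplex :: "(real^'d::finite) set" where
  "prob_simplex = {p. (\<forall>i. 0 \<le> p$i) \<and> (\<Sum>i\<in>UNIV. p$i) = 1}"

definition prob_simplex_int :: "(real^'d::finite) set" where
  "prob_simplex_int = {p. (\<forall>i. 0 < p$i) \<and> (\<Sum>i\<in>UNIV. p$i) = 1}"

definition cost :: "('a \<Rightarrow> 'd::finite \<Rightarrow> real) \<Rightarrow> 'a \<Rightarrow> real^'d \<Rightarrow> real" where
  "cost l x \<mu> = (\<Sum>i\<in>UNIV. l x i * \<mu>$i)"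

definition opt_cost :: "('a \<Rightarrow> 'd::finite \<Rightarrow> real) \<Rightarrow> 'a set \<Rightarrow> real^'d \<Rightarrow> real" where
  "opt_cost l X p = Inf ((\<lambda>x. cost l x p) ` X)"

definition emp :: "nat \<Rightarrow> (nat \<Rightarrow> 'd::finite) \<Rightarrow> real^'d" where
  "emp T w = (\<chi> i. real (card {t\<in>{..<T}. w t = i}) / real T)"

text \<open>Probability, under the i.i.d. law with marginal p, of an event depending
  only on the first T samples (the joint law of (xi_1,...,xi_T)).\<close>
definition iid_prob :: "real^'d::finite \<Rightarrow> nat \<Rightarrow> ((nat \<Rightarrow> 'd) \<Rightarrow> bool) \<Rightarrow> real" where
  "iid_prob p T E = (\<Sum>w\<in>PiE {..<T} (\<lambda>_. UNIV). if E w then (\<Prod>t<T. p$(w t)) else 0)"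

definition unif_bounded :: "'b set \<Rightarrow> (nat \<Rightarrow> 'b \<Rightarrow> 'c::real_normed_vector) \<Rightarrow> bool" where
  "unif_bounded S f \<longleftrightarrow> (\<exists>B. \<forall>T. \<forall>y\<in>S. norm (f T y) \<le> B)"

definition equicont_on :: "'b::metric_space set \<Rightarrow> (nat \<Rightarrow> 'b \<Rightarrow> 'c::metric_space) \<Rightarrow> bool" where
  "equicont_on S f \<longleftrightarrow>
     (\<forall>y\<in>S. \<forall>e>0. \<exists>\<delta>>0. \<forall>z\<in>S. dist z y < \<delta> \<longrightarrow> (\<forall>T. dist (f T y) (f T z) < e))"

text \<open>Regular predictors (the class C). A predictor is c x p T = hat c(x,P,T).\<close>
definition regular_predictor ::
  "'a::euclidean_space set \<Rightarrow> ('a \<Rightarrow> real^'d::finite \<Rightarrow> nat \<Rightarrow> real) \<Rightarrow> bool" where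
  "regular_predictor X c \<longleftrightarrow>
     unif_bounded (X \<times> prob_simplex) (\<lambda>T (x,p). c x p T) \<and>
     equicont_on (X \<times> prob_simplex) (\<lambda>T (x,p). c x p T) \<and>
     (\<exists>D :: nat \<Rightarrow> 'a \<Rightarrow> real^'d \<Rightarrow> real^'d.
        unif_bounded (X \<times> prob_simplex) (\<lambda>T (x,p). D T x p) \<and>
        equicont_on (X \<times> prob_simplex) (\<lambda>T (x,p). D T x p) \<and>
        (\<forall>T. \<forall>x\<in>X. \<forall>p\<in>prob_simplex.
           ((\<lambda>q. c x q T) has_derivative (\<lambda>h. D T x p \<bullet> h)) (at p within prob_simplex)))"

definition pp_pair ::
  "'a::euclidean_space set \<Rightarrow> ('a \<Rightarrow> real^'d::finite \<Rightarrow> nat \<Rightarrow> real) \<Rightarrow> (nat \<Rightarrow> real^'d \<Rightarrow> 'a) \<Rightarrow> bool" where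
  "pp_pair X c xh \<longleftrightarrow> regular_predictor X c \<and>
     (\<forall>T. \<forall>p\<in>prob_simplex. xh T p \<in> X \<and> (\<forall>x\<in>X. c (xh T p) p T \<le> c x p T))"

definition opt_pred :: "('a \<Rightarrow> 'p \<Rightarrow> nat \<Rightarrow> real) \<Rightarrow> (nat \<Rightarrow> 'p \<Rightarrow> 'a) \<Rightarrow> 'p \<Rightarrow> nat \<Rightarrow> real" where
  "opt_pred c xh p T = c (xh T p) p T"

definition log_rate :: "real \<Rightarrow> real \<Rightarrow> ereal" where
  "log_rate a q = (if q = 0 then -\<infinity> else ereal (ln q / a))"

definition oos_guarantee ::
  "('a \<Rightarrow> 'd::finite \<Rightarrow> real) \<Rightarrow> (nat \<Rightarrow> real) \<Rightarrow> ('a \<Rightarrow> real^'d \<Rightarrow> nat \<Rightarrow> real) \<Rightarrow> (nat \<Rightarrow> real^'d \<Rightarrow> 'a) \<Rightarrow> bool" where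
  "oos_guarantee l a c xh \<longleftrightarrow>
     (\<forall>p\<in>prob_simplex_int.
        limsup (\<lambda>T. log_rate (a T)
          (iid_prob p T (\<lambda>w. cost l (xh T (emp T w)) p > opt_pred c xh (emp T w) T))) \<le> -1)"

definition rel_ratio :: "real \<Rightarrow> real \<Rightarrow> ereal" where
  "rel_ratio u v = (if v = 0 then (if u = 0 then 1 else \<infinity>) else ereal (u / v))"

definition pp_preceq ::
  "('a \<Rightarrow> 'd::finite \<Rightarrow> real) \<Rightarrow> 'a set \<Rightarrow> ('a \<Rightarrow> real^'d \<Rightarrow> nat \<Rightarrow> real) \<Rightarrow> (nat \<Rightarrow> real^'d \<Rightarrow> 'a)
     \<Rightarrow> ('a \<Rightarrow> real^'d \<Rightarrow> nat \<Rightarrow> real) \<Rightarrow> (nat \<Rightarrow> real^'d \<Rightarrow> 'a) \<Rightarrow> bool" where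
  "pp_preceq l X c1 x1 c2 x2 \<longleftrightarrow>
     (\<forall>p\<in>prob_simplex_int.
        limsup (\<lambda>T. rel_ratio \<bar>opt_pred c1 x1 p T - opt_cost l X p\<bar>
                             \<bar>opt_pred c2 x2 p T - opt_cost l X p\<bar>) \<le> 1)"

definition robust_pred :: "('a \<Rightarrow> 'd::finite \<Rightarrow> real) \<Rightarrow> 'a \<Rightarrow> real^'d \<Rightarrow> nat \<Rightarrow> real" where
  "robust_pred l x p T = Max (range (l x))"

end

theory Submission imports Defs begin

lemma l_bounded:
  fixes X :: "'a::euclidean_space set" and l :: "'a \<Rightarrow> 'd::finite \<Rightarrow> real"
  assumes "compact X" "\<forall>i. continuous_on X (\<lambda>x. l x i)"
  shows "\<exists>M\<ge>0. \<forall>x\<in>X. \<forall>i. \<bar>l x i\<bar> \<le> M"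
proof -
  have "bounded (\<Union>i. (\<lambda>x. l x i) ` X)"
    using assms by (intro bounded_UN ballI compact_imp_bounded compact_continuous_image) auto
  then obtain M where M: "\<forall>y\<in>(\<Union>i. (\<lambda>x. l x i) ` X). norm y \<le> M"
    unfolding bounded_iff by blast
  have "\<bar>l x i\<bar> \<le> max M 0" if "x \<in> X" for x i
  proof -
    have "l x i \<in> (\<Union>i. (\<lambda>x. l x i) ` X)" using that by blast
    then have "norm (l x i) \<le> M" using M by blast
    then show ?thesis by simp
  qed
  then show ?thesis by (intro exI[of _ "max M 0"]) auto
qed

lemma Max_range_ge: "l x i \<le> Max (range (l x :: 'd::finite \<Rightarrow> real))"
  by (rule Max_ge) auto

lemma Max_range_in: "Max (range (l x :: 'd::finite \<Rightarrow> real)) \<in> range (l x)"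
  by (rule Max_in) auto

lemma cost_le_Max:
  assumes "p \<in> prob_simplex"
  shows "cost l x p \<le> Max (range (l x :: 'd::finite \<Rightarrow> real))"
proof -
  have "cost l x p \<le> (\<Sum>i\<in>UNIV. Max (range (l x)) * p$i)"
    unfolding cost_def using assms unfolding prob_simplex_def
    by (intro sum_mono mult_right_mono Max_range_ge) auto
  also have "\<dots> = Max (range (l x))"
    using assms unfolding prob_simplex_def by (simp add: sum_distrib_left[symmetric])
  finally show ?thesis .
qed

lemma cont_Max_aux:
  fixes l :: "'a::topological_space \<Rightarrow> 'd \<Rightarrow> real"
  assumes "finite A" "A \<noteq> {}" "\<forall>i. continuous_on X (\<lambda>x. l x i)"
  shows "continuous_on X (\<lambda>x. Max (l x ` A))"
  using assms(1,2)
proof (induction A rule: finite_ne_induct)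
  case (singleton x)
  then show ?case using assms(3) by simp
next
  case (insert x F)
  then show ?case using assms(3) by (simp add: continuous_on_max)
qed

lemma cont_Max:
  fixes l :: "'a::topological_space \<Rightarrow> 'd::finite \<Rightarrow> real"
  assumes "\<forall>i. continuous_on X (\<lambda>x. l x i)"
  shows "continuous_on X (\<lambda>x. Max (range (l x)))"
  using cont_Max_aux[OF _ _ assms, of UNIV] by simp

lemma convex_simplex: "convex (prob_simplex :: (real^'d::finite) set)"
  unfolding convex_def
proof (intro allI ballI impI)
  fix x y :: "real^'d" and u v :: real
  assume x: "x \<in> prob_simplex" and y: "y \<in> prob_simplex" and uv: "0 \<le> u" "0 \<le> v" "u + v = 1"
  have xs: "\<forall>i. 0 \<le> x$i" "(\<Sum>i\<in>UNIV. x$i) = 1" using x unfolding prob_simplex_def by auto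
  have ys: "\<forall>i. 0 \<le> y$i" "(\<Sum>i\<in>UNIV. y$i) = 1" using y unfolding prob_simplex_def by auto
  have "\<forall>i. 0 \<le> (u *\<^sub>R x + v *\<^sub>R y)$i" using xs ys uv by simp
  moreover have "(\<Sum>i\<in>UNIV. (u *\<^sub>R x + v *\<^sub>R y)$i) = u * (\<Sum>i\<in>UNIV. x$i) + v * (\<Sum>i\<in>UNIV. y$i)"
    by (simp add: sum.distrib sum_distrib_left)
  ultimately show "u *\<^sub>R x + v *\<^sub>R y \<in> prob_simplex"
    unfolding prob_simplex_def using xs ys uv by simp
qed


lemma pred_lipschitz:
  fixes X :: "'a::euclidean_space set" and c :: "'a \<Rightarrow> real^'d::finite \<Rightarrow> nat \<Rightarrow> real"
  assumes "regular_predictor X c"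
  shows "\<exists>B\<ge>0. \<forall>T. \<forall>x\<in>X. \<forall>p\<in>prob_simplex. \<forall>q\<in>prob_simplex.
            \<bar>c x p T - c x q T\<bar> \<le> B * norm (p - q)"
proof -
  obtain D :: "nat \<Rightarrow> 'a \<Rightarrow> real^'d \<Rightarrow> real^'d" where
    Db: "unif_bounded (X \<times> prob_simplex) (\<lambda>T (x,p). D T x p)" and
    Dd: "\<forall>T. \<forall>x\<in>X. \<forall>p\<in>prob_simplex.
           ((\<lambda>q. c x q T) has_derivative (\<lambda>h. D T x p \<bullet> h)) (at p within prob_simplex)"
    using assms unfolding regular_predictor_def by blast
  obtain B where B: "\<forall>T. \<forall>y\<in>X \<times> prob_simplex. norm ((\<lambda>(x,p). D T x p) y) \<le> B"
    using Db unfolding unif_bounded_def by blast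
  have "\<forall>T. \<forall>x\<in>X. \<forall>p\<in>prob_simplex. \<forall>q\<in>prob_simplex.
            \<bar>c x p T - c x q T\<bar> \<le> max B 0 * norm (p - q)"
  proof (intro allI ballI)
    fix T x and p q :: "real^'d" assume x: "x \<in> X" and p: "p \<in> prob_simplex" and q: "q \<in> prob_simplex"
    have "norm (c x p T - c x q T) \<le> max B 0 * norm (p - q)"
    proof (rule differentiable_bound[OF convex_simplex])
      fix y :: "real^'d" assume y: "y \<in> prob_simplex"
      show "((\<lambda>q. c x q T) has_derivative (\<lambda>h. D T x y \<bullet> h)) (at y within prob_simplex)"
        using Dd x y by blast
      have nD: "norm (D T x y) \<le> B" using B x y by fastforce
      show "onorm (\<lambda>h. D T x y \<bullet> h) \<le> max B 0"
      proof (rule onorm_bound)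
        fix h
        have "norm (D T x y \<bullet> h) \<le> norm (D T x y) * norm h" by (simp add: Cauchy_Schwarz_ineq2)
        also have "\<dots> \<le> max B 0 * norm h" using nD by (intro mult_right_mono) auto
        finally show "norm (D T x y \<bullet> h) \<le> max B 0 * norm h" .
      qed simp
    qed (use p q in auto)
    then show "\<bar>c x p T - c x q T\<bar> \<le> max B 0 * norm (p - q)" by simp
  qed
  then show ?thesis by (intro exI[of _ "max B 0"]) auto
qed

lemma rare_event:
  fixes l :: "'a \<Rightarrow> 'd::finite \<Rightarrow> real" and q :: "real^'d"
  assumes q: "q \<in> prob_simplex_int"
    and G: "oos_guarantee l a c xh"
    and apos: "\<forall>T\<ge>1. a T > 0"
    and aT: "filterlim (\<lambda>T. a T / real T) at_top sequentially"
  shows "eventually (\<lambda>T. \<forall>w\<in>PiE {..<T} (\<lambda>_. UNIV).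
            \<not> (cost l (xh T (emp T w)) q > opt_pred c xh (emp T w) T)) sequentially"
proof -
  define P where "P T = iid_prob q T (\<lambda>w. cost l (xh T (emp T w)) q > opt_pred c xh (emp T w) T)" for T
  have "limsup (\<lambda>T. log_rate (a T) (P T)) \<le> -1"
    using G q unfolding oos_guarantee_def P_def by blast
  then have "limsup (\<lambda>T. log_rate (a T) (P T)) < ereal (-1/2)"
  proof (rule le_less_trans)
    have "(-1::ereal) = ereal (-1)" by (simp add: one_ereal_def)
    then show "(-1::ereal) < ereal (-1/2)" by simp
  qed
  then have ev1: "eventually (\<lambda>T. log_rate (a T) (P T) < ereal (-1/2)) sequentially"
    by (rule Limsup_lessD)
  define m where "m = Min (range (\<lambda>i. q$i))"
  have mpos: "m > 0" using q unfolding m_def prob_simplex_int_def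
    by (subst Min_gr_iff) auto
  have mle: "\<And>i. m \<le> q$i" unfolding m_def by (rule Min_le) auto
  have ev2: "eventually (\<lambda>T. a T / real T > -2 * ln m) sequentially"
    using aT by (simp add: filterlim_at_top_dense)
  have ev3: "eventually (\<lambda>T. T \<ge> 1) sequentially" by (rule eventually_ge_at_top)
  show ?thesis
    using ev1 ev2 ev3
  proof eventually_elim
    case (elim T)
    show ?case
    proof (intro ballI notI)
      fix w assume w: "w \<in> PiE {..<T} (\<lambda>_. UNIV)"
        and E: "cost l (xh T (emp T w)) q > opt_pred c xh (emp T w) T"
      have Tpos: "real T > 0" "a T > 0" using elim apos by auto
      have qnn: "\<And>i. q$i \<ge> 0" using q unfolding prob_simplex_int_def by (auto intro: less_imp_le)
      have "m ^ T \<le> (\<Prod>t<T. q$(w t))"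
        using prod_mono[of "{..<T}" "\<lambda>_. m" "\<lambda>t. q$(w t)"] mpos mle by simp
      also have "(\<Prod>t<T. q$(w t)) \<le> P T"
      proof -
        have fin: "finite (PiE {..<T} (\<lambda>_. UNIV :: 'd set))" by (rule finite_PiE) auto
        have "(\<lambda>w. if cost l (xh T (emp T w)) q > opt_pred c xh (emp T w) T then (\<Prod>t<T. q$(w t)) else 0) w
              \<le> (\<Sum>w\<in>PiE {..<T} (\<lambda>_. UNIV). if cost l (xh T (emp T w)) q > opt_pred c xh (emp T w) T then (\<Prod>t<T. q$(w t)) else 0)"
        proof (rule member_le_sum[OF w _ fin])
          fix w' :: "nat \<Rightarrow> 'd"
          have "0 \<le> (\<Prod>t<T. q$(w' t))" by (rule prod_nonneg) (simp add: qnn)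
          then show "0 \<le> (if cost l (xh T (emp T w')) q > opt_pred c xh (emp T w') T then (\<Prod>t<T. q$(w' t)) else 0)"
            by simp
        qed
        then show ?thesis using E unfolding P_def iid_prob_def by simp
      qed
      finally have mP: "m ^ T \<le> P T" .
      have PT: "P T > 0" using mP mpos by (meson less_le_trans zero_less_power)
      have "ln (m ^ T) \<le> ln (P T)" using mP mpos PT by simp
      then have "real T * ln m / a T \<le> ln (P T) / a T"
        using Tpos by (simp add: ln_realpow divide_right_mono)
      moreover have "real T * ln m / a T > -1/2"
      proof -
        have "a T > -2 * ln m * real T" using elim(2) Tpos by (simp add: field_simps)
        then show ?thesis using Tpos by (simp add: field_simps)
      qed
      ultimately have "ln (P T) / a T > -1/2" by linarith
      with elim(1) PT show False unfolding log_rate_def by simp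
    qed
  qed
qed


lemma threshold_count:
  fixes C :: "nat \<Rightarrow> nat"
  assumes mono: "\<And>i j. i \<le> j \<Longrightarrow> C i \<le> C j" and C0: "C 0 = 0" and Cn: "C n = T" and n1: "n \<ge> 1"
  shows "\<And>t. t < T \<Longrightarrow> (LEAST k. t < C (Suc k)) < n"
    and "\<And>j. j < n \<Longrightarrow> {t\<in>{..<T}. (LEAST k. t < C (Suc k)) = j} = {C j..<C (Suc j)}"
proof -
  fix t assume t: "t < T"
  have "t < C (Suc (n - 1))" using t Cn n1 by simp
  then have "(LEAST k. t < C (Suc k)) \<le> n - 1" by (rule Least_le)
  then show "(LEAST k. t < C (Suc k)) < n" using n1 by simp
next
  fix j assume j: "j < n"
  show "{t\<in>{..<T}. (LEAST k. t < C (Suc k)) = j} = {C j..<C (Suc j)}"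
  proof (intro set_eqI iffI)
    fix t assume "t \<in> {t\<in>{..<T}. (LEAST k. t < C (Suc k)) = j}"
    then have t: "t < T" and L: "(LEAST k. t < C (Suc k)) = j" by auto
    have ex: "t < C (Suc (n - 1))" using t Cn n1 by simp
    have 1: "t < C (Suc j)" using LeastI[of "\<lambda>k. t < C (Suc k)", OF ex] L by simp
    have 2: "C j \<le> t"
    proof (cases j)
      case 0 then show ?thesis using C0 by simp
    next
      case (Suc j')
      have "\<not> t < C (Suc j')" using not_less_Least[of j' "\<lambda>k. t < C (Suc k)"] L Suc by simp
      then show ?thesis using Suc by simp
    qed
    show "t \<in> {C j..<C (Suc j)}" using 1 2 by simp
  next
    fix t assume "t \<in> {C j..<C (Suc j)}"
    then have 1: "C j \<le> t" "t < C (Suc j)" by auto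
    have "C (Suc j) \<le> C n" using j by (intro mono) simp
    then have tT: "t < T" using 1 Cn by simp
    have "(LEAST k. t < C (Suc k)) = j"
    proof (rule Least_equality)
      show "t < C (Suc j)" by fact
      fix y assume y: "t < C (Suc y)"
      show "j \<le> y"
      proof (rule ccontr)
        assume "\<not> j \<le> y"
        then have "C (Suc y) \<le> C j" by (intro mono) simp
        then show False using y 1 by simp
      qed
    qed
    then show "t \<in> {t\<in>{..<T}. (LEAST k. t < C (Suc k)) = j}" using tT by simp
  qed
qed

lemma ceil_bounds: "y \<le> real_of_int \<lceil>y\<rceil>" "real_of_int \<lceil>y\<rceil> < y + 1"
  by linarith+

lemma types_exist:
  fixes p :: "real^'d::finite"
  assumes p: "p \<in> prob_simplex" and T1: "T \<ge> 1"
  shows "\<exists>w\<in>PiE {..<T} (\<lambda>_. UNIV). emp T w \<in> prob_simplex \<and>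
           norm (emp T w - p) \<le> real CARD('d) / real T"
proof -
  define d where "d = CARD('d)"
  have d1: "d \<ge> 1" unfolding d_def by (simp add: Suc_leI)
  obtain g :: "nat \<Rightarrow> 'd" where g: "bij_betw g {..<d} UNIV"
    using ex_bij_betw_nat_finite[of "UNIV :: 'd set"] unfolding d_def atLeast0LessThan by auto
  have reidx: "\<And>f :: 'd \<Rightarrow> real. (\<Sum>j<d. f (g j)) = (\<Sum>i\<in>UNIV. f i)"
    using g by (rule sum.reindex_bij_betw)
  have pnn: "\<And>i. p$i \<ge> 0" and psum: "(\<Sum>i\<in>UNIV. p$i) = 1" using p unfolding prob_simplex_def by auto
  define F where "F k = (\<Sum>j<k. p$(g j))" for k
  have Fmono: "F i \<le> F j" if "i \<le> j" for i j
    unfolding F_def using that pnn by (intro sum_mono2) auto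
  have F0: "F 0 = 0" unfolding F_def by simp
  have Fd: "F d = 1" unfolding F_def using reidx[of "\<lambda>i. p$i"] psum by simp
  have Fnn: "F k \<ge> 0" for k using Fmono[of 0 k] F0 by simp
  have FS: "F (Suc j) = F j + p$(g j)" for j unfolding F_def by simp
  define C where "C k = nat \<lceil>real T * F k\<rceil>" for k
  have C_real: "real (C k) = real_of_int \<lceil>real T * F k\<rceil>" for k
    unfolding C_def using Fnn[of k] by (simp add: zero_le_mult_iff)
  have Cmono: "C i \<le> C j" if "i \<le> j" for i j
    unfolding C_def using Fmono[OF that] by (intro nat_mono ceiling_mono mult_left_mono) auto
  have C0: "C 0 = 0" unfolding C_def F0 by simp
  have Cd: "C d = T" unfolding C_def Fd by simp
  define k where "k t = (LEAST k. t < C (Suc k))" for t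
  have tc1: "k t < d" if "t < T" for t
    unfolding k_def by (rule threshold_count(1)[of C]) (use that Cmono C0 Cd d1 in auto)
  have tc2: "{t\<in>{..<T}. k t = j} = {C j..<C (Suc j)}" if "j < d" for j
    unfolding k_def by (rule threshold_count(2)[of C]) (use that Cmono C0 Cd d1 in auto)
  define w where "w t = (if t < T then g (k t) else undefined)" for t
  have wP: "w \<in> PiE {..<T} (\<lambda>_. UNIV)" unfolding w_def by (auto simp: PiE_iff extensional_def)
  have ginj: "inj_on g {..<d}" using g by (simp add: bij_betw_def)
  have cnt: "card {t\<in>{..<T}. w t = g j} = C (Suc j) - C j" if j: "j < d" for j
  proof -
    have "{t\<in>{..<T}. w t = g j} = {t\<in>{..<T}. k t = j}"
      using tc1 j ginj unfolding w_def by (auto dest: inj_onD)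
    then show ?thesis using tc2[OF j] by simp
  qed
  have empg: "emp T w $ g j = (real (C (Suc j)) - real (C j)) / real T" if j: "j < d" for j
    unfolding emp_def using cnt[OF j] Cmono[of j "Suc j"] by (simp add: of_nat_diff)
  have close: "\<bar>emp T w $ g j - p $ g j\<bar> \<le> 1 / real T" if j: "j < d" for j
  proof -
    have Tpos: "real T > 0" using T1 by simp
    have "\<bar>real (C (Suc j)) - real (C j) - real T * p $ g j\<bar> \<le> 1"
    proof -
      note a = ceil_bounds[of "real T * F j"] and b = ceil_bounds[of "real T * (F j + p $ g j)"]
      have e: "real T * (F j + p $ g j) = real T * F j + real T * p $ g j" by (simp add: algebra_simps)
      show ?thesis unfolding C_real FS abs_le_iff using a b unfolding e by linarith
    qed
    then have "\<bar>(real (C (Suc j)) - real (C j)) / real T - p $ g j\<bar> \<le> 1 / real T"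
      using Tpos by (simp add: field_simps abs_divide[symmetric] abs_le_iff)
    then show ?thesis using empg[OF j] by simp
  qed
  have surj: "\<exists>j<d. i = g j" for i using g unfolding bij_betw_def by force
  have close_all: "\<bar>emp T w $ i - p $ i\<bar> \<le> 1 / real T" for i
    using surj[of i] close by auto
  have enn: "emp T w $ i \<ge> 0" for i unfolding emp_def by simp
  have "(\<Sum>i\<in>UNIV. emp T w $ i) = (\<Sum>j<d. emp T w $ g j)" using reidx by simp
  also have "\<dots> = (\<Sum>j<d. (real (C (Suc j)) - real (C j)) / real T)" using empg by simp
  also have "\<dots> = (\<Sum>j<d. real (C (Suc j)) - real (C j)) / real T" by (simp add: sum_divide_distrib)
  also have "\<dots> = 1"
  proof -
    have "(\<Sum>j<d. real (C (Suc j)) - real (C j)) = real (C d) - real (C 0)"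
      by (rule sum_lessThan_telescope)
    then show ?thesis using T1 by (simp add: C0 Cd)
  qed
  finally have esum: "(\<Sum>i\<in>UNIV. emp T w $ i) = 1" .
  have "norm (emp T w - p) \<le> (\<Sum>i\<in>UNIV. \<bar>(emp T w - p) $ i\<bar>)" by (rule norm_le_l1_cart)
  also have "\<dots> \<le> (\<Sum>i\<in>(UNIV::'d set). 1 / real T)" using close_all by (intro sum_mono) simp
  also have "\<dots> = real d / real T" unfolding d_def by simp
  finally show ?thesis using wP enn esum unfolding prob_simplex_def d_def by auto
qed


lemma interior_sub: "p \<in> prob_simplex_int \<Longrightarrow> p \<in> prob_simplex"
  unfolding prob_simplex_int_def prob_simplex_def by (auto intro: less_imp_le)

lemma key:
  fixes X :: "'a::euclidean_space set" and l :: "'a \<Rightarrow> 'd::finite \<Rightarrow> real"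
    and c :: "'a \<Rightarrow> real^'d \<Rightarrow> nat \<Rightarrow> real" and xh :: "nat \<Rightarrow> real^'d \<Rightarrow> 'a"
  assumes apos: "\<forall>T\<ge>1. a T > 0"
    and aT: "filterlim (\<lambda>T. a T / real T) at_top sequentially"
    and pp: "pp_pair X c xh" and G: "oos_guarantee l a c xh"
    and p: "p \<in> prob_simplex_int"
    and R0: "\<forall>x\<in>X. R0 \<le> Max (range (l x))"
    and eps: "\<epsilon> > 0"
    and M: "M \<ge> 0" "\<forall>x\<in>X. \<forall>i. \<bar>l x i\<bar> \<le> M"
  shows "eventually (\<lambda>T. opt_pred c xh p T \<ge> R0 - \<epsilon>) sequentially"
proof -
  have reg: "regular_predictor X c" and xhX: "\<And>T q. q \<in> prob_simplex \<Longrightarrow> xh T q \<in> X"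
    and xhmin: "\<And>T q x. q \<in> prob_simplex \<Longrightarrow> x \<in> X \<Longrightarrow> c (xh T q) q T \<le> c x q T"
    using pp unfolding pp_pair_def by auto
  obtain B where B0: "B \<ge> 0" and B: "\<forall>T. \<forall>x\<in>X. \<forall>p\<in>prob_simplex. \<forall>q\<in>prob_simplex.
            \<bar>c x p T - c x q T\<bar> \<le> B * norm (p - q)"
    using pred_lipschitz[OF reg] by blast
  define d where "d = real CARD('d)"
  have d0: "d > 0" unfolding d_def by simp
  define \<delta> where "\<delta> = min (1/2) (\<epsilon> / (4*M+1))"
  have \<delta>0: "\<delta> > 0" unfolding \<delta>_def using eps M by simp
  have \<delta>1: "\<delta> \<le> 1/2" unfolding \<delta>_def by (rule min.cobounded1)
  have \<delta>M: "2 * M * \<delta> \<le> \<epsilon> / 2"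
  proof -
    have "\<delta> \<le> \<epsilon> / (4*M+1)" unfolding \<delta>_def by simp
    then have "\<delta> * (4*M+1) \<le> \<epsilon>" using M by (simp add: field_simps)
    then show ?thesis using M \<delta>0 by (simp add: field_simps)
  qed
  define q :: "'d \<Rightarrow> real^'d" where "q j = (\<chi> i. (if i = j then 1 - \<delta> else 0) + \<delta> / d)" for j
  have qint: "q j \<in> prob_simplex_int" for j
  proof -
    have "\<forall>i. 0 < q j $ i" unfolding q_def using \<delta>0 \<delta>1 d0 by (auto simp: add_pos_nonneg)
    moreover have "(\<Sum>i\<in>UNIV. q j $ i) = 1"
      unfolding q_def using d0 by (simp add: sum.distrib d_def)
    ultimately show ?thesis unfolding prob_simplex_int_def by simp
  qed
  have qcost: "l x j - \<epsilon>/2 \<le> cost l x (q j)" if x: "x \<in> X" for x j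
  proof -
    have "cost l x (q j) = (\<Sum>i\<in>UNIV. (if i = j then (1 - \<delta>) * l x i else 0)) + (\<delta>/d) * (\<Sum>i\<in>UNIV. l x i)"
    proof -
      have "\<And>i. l x i * q j $ i = (if i = j then (1 - \<delta>) * l x i else 0) + (\<delta>/d) * l x i"
        unfolding q_def by (simp add: algebra_simps)
      then show ?thesis unfolding cost_def by (simp add: sum.distrib sum_distrib_left)
    qed
    also have "\<dots> = (1 - \<delta>) * l x j + (\<delta>/d) * (\<Sum>i\<in>UNIV. l x i)" by simp
    finally have eq: "cost l x (q j) = (1 - \<delta>) * l x j + (\<delta>/d) * (\<Sum>i\<in>UNIV. l x i)" .
    have "(\<Sum>i\<in>UNIV. l x i) \<ge> (\<Sum>i\<in>(UNIV::'d set). -M)"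
      using M x by (intro sum_mono) (metis abs_le_iff minus_le_iff)
    then have s: "(\<Sum>i\<in>UNIV. l x i) \<ge> - d * M" unfolding d_def by simp
    have "(\<delta>/d) * (\<Sum>i\<in>UNIV. l x i) \<ge> (\<delta>/d) * (- d * M)"
      using s \<delta>0 d0 by (intro mult_left_mono) auto
    then have 1: "(\<delta>/d) * (\<Sum>i\<in>UNIV. l x i) \<ge> - \<delta> * M" using d0 by simp
    have "\<bar>l x j\<bar> \<le> M" using M x by auto
    then have 2: "\<delta> * l x j \<le> \<delta> * M" using \<delta>0 by (intro mult_left_mono) auto
    show ?thesis unfolding eq using 1 2 \<delta>M by (simp add: algebra_simps)
  qed
  have ev1: "eventually (\<lambda>T. \<forall>j. \<forall>w\<in>PiE {..<T} (\<lambda>_. UNIV).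
            \<not> (cost l (xh T (emp T w)) (q j) > opt_pred c xh (emp T w) T)) sequentially"
    using rare_event[OF qint G apos aT] by (simp add: eventually_all_finite)
  have ev2: "eventually (\<lambda>T. T \<ge> max 1 (nat \<lceil>2 * B * d / \<epsilon>\<rceil>)) sequentially"
    by (rule eventually_ge_at_top)
  show ?thesis using ev1 ev2
  proof eventually_elim
    case (elim T)
    have T1: "T \<ge> 1" using elim(2) by simp
    have Tpos: "real T > 0" using T1 by simp
    have "2 * B * d / \<epsilon> \<le> real T" using elim(2) by linarith
    then have BdT: "B * (d / real T) \<le> \<epsilon> / 2" using Tpos eps by (simp add: field_simps)
    have pS: "p \<in> prob_simplex" using p by (rule interior_sub)
    obtain w where w: "w \<in> PiE {..<T} (\<lambda>_. UNIV)" and rS: "emp T w \<in> prob_simplex"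
      and rp: "norm (emp T w - p) \<le> d / real T"
      using types_exist[OF pS T1] unfolding d_def by blast
    define r where "r = emp T w"
    define x where "x = xh T r"
    have xX: "x \<in> X" unfolding x_def r_def using rS by (rule xhX)
    have "l x j \<le> c x r T + \<epsilon>/2" for j
    proof -
      have "\<not> (cost l x (q j) > opt_pred c xh r T)" using elim(1) w unfolding x_def r_def by blast
      then have "cost l x (q j) \<le> c x r T" unfolding opt_pred_def x_def by simp
      then show ?thesis using qcost[OF xX, of j] by simp
    qed
    then have Mx: "Max (range (l x)) \<le> c x r T + \<epsilon>/2" using Max_range_in[of l x] by auto
    have "R0 \<le> Max (range (l x))" using R0 xX by blast
    have pX: "xh T p \<in> X" using pS by (rule xhX)
    have "c x r T \<le> c (xh T p) r T" unfolding x_def using xhmin[OF _ pX] rS unfolding r_def by blast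
    have "\<bar>c (xh T p) r T - c (xh T p) p T\<bar> \<le> B * norm (r - p)"
      using B pX rS pS unfolding r_def by blast
    also have "\<dots> \<le> B * (d / real T)" using rp B0 unfolding r_def by (intro mult_left_mono) auto
    finally have "\<bar>c (xh T p) r T - c (xh T p) p T\<bar> \<le> \<epsilon>/2" using BdT by linarith
    then show ?case unfolding opt_pred_def
      using Mx \<open>R0 \<le> Max (range (l x))\<close> \<open>c x r T \<le> c (xh T p) r T\<close> by linarith
  qed
qed


theorem mainTheorem13:
  fixes X :: "'a::euclidean_space set"
    and l :: "'a \<Rightarrow> 'd::finite \<Rightarrow> real"
    and a :: "nat \<Rightarrow> real"
    and xR :: "nat \<Rightarrow> real^'d \<Rightarrow> 'a"
  assumes "CARD('d) \<ge> 2"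
    and "compact X" and "X \<noteq> {}"
    and "\<forall>i. continuous_on X (\<lambda>x. l x i)"
    and "\<forall>T\<ge>1. a T > 0"
    and "filterlim a at_top sequentially"
    and "filterlim (\<lambda>T. a T / real T) at_top sequentially"
    and "\<forall>T. \<forall>p\<in>prob_simplex. xR T p \<in> X \<and> (\<forall>x\<in>X. Max (range (l (xR T p))) \<le> Max (range (l x)))"
  shows "pp_pair X (robust_pred l) xR \<and> oos_guarantee l a (robust_pred l) xR \<and>
         (\<forall>(c :: 'a \<Rightarrow> real^'d \<Rightarrow> nat \<Rightarrow> real) (xh :: nat \<Rightarrow> real^'d \<Rightarrow> 'a).
            pp_pair X c xh \<and> oos_guarantee l a c xh \<longrightarrow> pp_preceq l X (robust_pred l) xR c xh)"
proof -
  note cpt = assms(2) and lcont = assms(4) and apos = assms(5) and aT = assms(7) and xR = assms(8)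
  obtain M where M0: "M \<ge> 0" and M: "\<forall>x\<in>X. \<forall>i. \<bar>l x i\<bar> \<le> M"
    using l_bounded[OF cpt lcont] by blast
  have MaxM: "\<bar>Max (range (l x))\<bar> \<le> M" if "x \<in> X" for x
  proof -
    obtain i where "Max (range (l x)) = l x i" using Max_range_in[of l x] by (metis rangeE)
    then show ?thesis using M that by simp
  qed
  have P1: "pp_pair X (robust_pred l) xR"
    unfolding pp_pair_def regular_predictor_def
  proof (intro conjI allI ballI)
    show "unif_bounded (X \<times> prob_simplex) (\<lambda>T (x, p). robust_pred l x p T)"
      unfolding unif_bounded_def robust_pred_def using MaxM by auto
    have cont: "continuous_on (X \<times> prob_simplex) (\<lambda>z. Max (range (l (fst z))))"
      by (rule continuous_on_compose2[OF cont_Max[OF lcont] continuous_on_fst]) auto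
    show "equicont_on (X \<times> prob_simplex) (\<lambda>T (x, p). robust_pred l x p T)"
      unfolding equicont_on_def robust_pred_def
    proof (intro ballI allI impI)
      fix y :: "'a \<times> (real^'d)" and e :: real assume y: "y \<in> X \<times> prob_simplex" and e: "e > 0"
      obtain \<delta> where "\<delta> > 0" and \<delta>: "\<forall>z\<in>X \<times> prob_simplex. dist z y < \<delta> \<longrightarrow>
          dist (Max (range (l (fst z)))) (Max (range (l (fst y)))) < e"
        using cont y e unfolding continuous_on_iff by metis
      then show "\<exists>\<delta>>0. \<forall>z\<in>X \<times> prob_simplex. dist z y < \<delta> \<longrightarrow>
          (\<forall>T. dist ((\<lambda>(x, p). Max (range (l x))) y) ((\<lambda>(x, p). Max (range (l x))) z) < e)"
        by (auto simp: dist_commute split: prod.splits)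
    qed
    show "\<exists>D :: nat \<Rightarrow> 'a \<Rightarrow> real^'d \<Rightarrow> real^'d.
        unif_bounded (X \<times> prob_simplex) (\<lambda>T (x,p). D T x p) \<and>
        equicont_on (X \<times> prob_simplex) (\<lambda>T (x,p). D T x p) \<and>
        (\<forall>T. \<forall>x\<in>X. \<forall>p\<in>prob_simplex.
           ((\<lambda>q. robust_pred l x q T) has_derivative (\<lambda>h. D T x p \<bullet> h)) (at p within prob_simplex))"
      by (rule exI[of _ "\<lambda>T x p. 0"])
         (auto simp: unif_bounded_def equicont_on_def robust_pred_def intro: has_derivative_const)
  next
    fix T and p :: "real^'d" assume "p \<in> prob_simplex"
    then show "xR T p \<in> X" using xR by blast
  next
    fix T x and p :: "real^'d" assume "p \<in> prob_simplex" "x \<in> X"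
    then show "robust_pred l (xR T p) p T \<le> robust_pred l x p T"
      unfolding robust_pred_def using xR by blast
  qed
  have P2: "oos_guarantee l a (robust_pred l) xR"
    unfolding oos_guarantee_def
  proof
    fix p :: "real^'d" assume p: "p \<in> prob_simplex_int"
    have pS: "p \<in> prob_simplex" using p by (rule interior_sub)
    have nev: "\<And>T w. \<not> (Max (range (l (xR T (emp T w)))) < cost l (xR T (emp T w)) p)"
      using cost_le_Max[OF pS] by (simp add: not_less del: Max_less_iff)
    have "\<And>T. iid_prob p T (\<lambda>w. cost l (xR T (emp T w)) p > opt_pred (robust_pred l) xR (emp T w) T) = 0"
      unfolding iid_prob_def opt_pred_def robust_pred_def
      using nev by (simp del: Max_less_iff)
    then show "limsup (\<lambda>T. log_rate (a T)
          (iid_prob p T (\<lambda>w. cost l (xR T (emp T w)) p > opt_pred (robust_pred l) xR (emp T w) T))) \<le> -1"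
      unfolding log_rate_def by (simp add: Limsup_const)
  qed
  have P3: "pp_preceq l X (robust_pred l) xR c xh"
    if pp: "pp_pair X c xh" and G: "oos_guarantee l a c xh" for c xh
    unfolding pp_preceq_def
  proof
    fix p :: "real^'d" assume p: "p \<in> prob_simplex_int"
    have pS: "p \<in> prob_simplex" using p by (rule interior_sub)
    define R0 where "R0 = Max (range (l (xR 0 p)))"
    have R0X: "\<forall>x\<in>X. R0 \<le> Max (range (l x))" unfolding R0_def using xR pS by blast
    have RT: "opt_pred (robust_pred l) xR p T = R0" for T
    proof -
      have "Max (range (l (xR T p))) \<le> R0" unfolding R0_def using xR pS by blast
      moreover have "R0 \<le> Max (range (l (xR T p)))" using R0X xR pS by blast
      ultimately show ?thesis unfolding opt_pred_def robust_pred_def by (rule antisym)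
    qed
    define C0 where "C0 = opt_cost l X p"
    have "bdd_below ((\<lambda>x. cost l x p) ` X)"
    proof (rule bdd_belowI2)
      fix x assume x: "x \<in> X"
      have "(\<Sum>i\<in>UNIV. (-M) * p$i) \<le> cost l x p"
        unfolding cost_def
      proof (intro sum_mono mult_right_mono)
        fix i
        show "- M \<le> l x i" using M x by (metis abs_le_iff minus_le_iff)
        show "0 \<le> p $ i" using pS unfolding prob_simplex_def by simp
      qed
      then show "- M \<le> cost l x p" using pS unfolding prob_simplex_def
        by (simp add: sum_negf sum_distrib_left[symmetric])
    qed
    then have "C0 \<le> cost l (xR 0 p) p" unfolding C0_def opt_cost_def
      using xR pS by (intro cInf_lower) auto
    also have "\<dots> \<le> R0" unfolding R0_def by (rule cost_le_Max[OF pS])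
    finally have C0R0: "C0 \<le> R0" .
    define u where "u = R0 - C0"
    have u0: "u \<ge> 0" unfolding u_def using C0R0 by simp
    have num: "\<bar>opt_pred (robust_pred l) xR p T - opt_cost l X p\<bar> = u" for T
      unfolding RT u_def C0_def using C0R0 C0_def by simp
    show "limsup (\<lambda>T. rel_ratio \<bar>opt_pred (robust_pred l) xR p T - opt_cost l X p\<bar>
                             \<bar>opt_pred c xh p T - opt_cost l X p\<bar>) \<le> 1"
      unfolding num
    proof (cases "u = 0")
      case True
      show "limsup (\<lambda>T. rel_ratio u \<bar>opt_pred c xh p T - opt_cost l X p\<bar>) \<le> 1"
        unfolding True rel_ratio_def by (intro Limsup_bounded) (simp add: one_ereal_def)
    next
      case False
      then have upos: "u > 0" using u0 by simp
      show "limsup (\<lambda>T. rel_ratio u \<bar>opt_pred c xh p T - opt_cost l X p\<bar>) \<le> 1"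
      proof (rule ereal_le_epsilon2)
        fix e :: real assume e: "e > 0"
        define \<epsilon> where "\<epsilon> = u * e / (1 + e)"
        have eps: "\<epsilon> > 0" unfolding \<epsilon>_def using upos e by simp
        have ev: "eventually (\<lambda>T. opt_pred c xh p T \<ge> R0 - \<epsilon>) sequentially"
          by (rule key[OF apos aT pp G p R0X eps M0 M])
        have "eventually (\<lambda>T. rel_ratio u \<bar>opt_pred c xh p T - opt_cost l X p\<bar> \<le> 1 + ereal e) sequentially"
          using ev
        proof eventually_elim
          case (elim T)
          have ue: "u - \<epsilon> = u / (1 + e)" unfolding \<epsilon>_def using e by (simp add: field_simps)
          have ue0: "u / (1 + e) > 0" using upos e by simp
          have v: "opt_pred c xh p T - C0 \<ge> u / (1 + e)" using elim ue unfolding u_def by simp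
          then have vpos: "opt_pred c xh p T - C0 > 0" using ue0 by linarith
          have "u / (opt_pred c xh p T - C0) \<le> u / (u / (1 + e))"
          proof (rule divide_left_mono[OF v])
            show "0 \<le> u" using upos by simp
            show "0 < (opt_pred c xh p T - C0) * (u / (1 + e))" using vpos ue0 by (rule mult_pos_pos)
          qed
          also have "\<dots> = 1 + e" using upos e by (simp add: field_simps)
          finally have "u / (opt_pred c xh p T - C0) \<le> 1 + e" .
          then show ?case unfolding rel_ratio_def C0_def[symmetric] using vpos
            by (simp add: one_ereal_def)
        qed
        then show "limsup (\<lambda>T. rel_ratio u \<bar>opt_pred c xh p T - opt_cost l X p\<bar>) \<le> 1 + ereal e"
          by (rule Limsup_bounded)
      qed
    qed
  qed
  show ?thesis using P1 P2 P3 by blast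
qed

end
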